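(* Let $\mathcal{A}$ be a bounded-spread implementation of a logical operator $\bar{A}$ on a stabiliser code family. Then for every logical Pauli operator $\bar{P}$, $\bar{P}\in\mathbf{P}_\downarrow$ implies $\bar{A}\bar{P}\bar{A}^\dagger\in\mathbf{L}_\downarrow$.
   Context: A code family is a sequence $(\mathcal{C}_l)_{l\in\mathbb{N}}$ of stabiliser codes, $\mathcal{C}_l$ acting on $n=n(l)$ physical qubits; $\mathbf{P}_n$ is the $n$-qubit Pauli group. Quantum channels are written in the Heisenberg picture, $\mathcal{A}(U)=\sum_iA_iUA_i^\dagger$, $\sum_iA_i^\dagger A_i=I$. A logical operator implementation of a logical operator $\bar{A}$ is a channel $\mathcal{A}$ such that, for every logical operator $\bar{U}$ and every representative (physical operator) $U$ of $\bar{U}$, $\mathcal{A}(U)$ is a representative of $\bar{A}\bar{U}\bar{A}^\dagger$ (its action on non-logical operators is arbitrary); it need not be unitary. The weight $\mathrm{wt}(O)$ is the number of qubits on which $O$ acts non-trivially. The spread of $E\in\mathbf{P}_n$ under $\mathcal{A}$ is $s_{\mathcal{A}}(E)=\mathrm{wt}(\mathcal{A}(E))/\mathrm{wt}(E)$, $s_{\mathcal{A}}=\max_{E\in\mathbf{P}_n}s_{\mathcal{A}}(E)$, and $\mathcal{A}$ has bounded spread if there is a constant $C$ independent of $l$ with $s_{\mathcal{A}}\le C$ for all $l$. For a logical operator $\bar{L}$ (specified for each $l$), its distance $d_{\bar{L}}$ is the minimum weight of a representative of $\bar{L}$; $d$ is the code distance. Let $\mathbf{L}$ be the set of logical operators,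 $\mathbf{L}_\downarrow=\{\bar{L}\in\mathbf{L}:\exists C\in\mathbb{R}\text{ such that } d_{\bar{L}}/d\le C\text{ for all }l\in\mathbb{N}\}$, and $\mathbf{P}_\downarrow$ the set of logical Pauli operators lying in $\mathbf{L}_\downarrow$. *)

theory Defs
  imports "Jordan_Normal_Form.Schur_Decomposition"
begin

text \<open>Basis index r < 2^n; bit j of r is the state of qubit j.\<close>

definition qbit :: "nat \<Rightarrow> nat \<Rightarrow> bool" where
  "qbit r j = odd (r div 2 ^ j)"

definition qclr :: "nat \<Rightarrow> nat \<Rightarrow> nat" where
  "qclr r j = (if qbit r j then r - 2 ^ j else r)"

text \<open>O acts trivially on qubit i: O = O' (tensor) I on qubit i.\<close>
definition acts_trivially_on :: "nat \<Rightarrow> nat \<Rightarrow> complex mat \<Rightarrow> bool" where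
  "acts_trivially_on n i M \<longleftrightarrow>
     (\<forall>r < 2 ^ n. \<forall>c < 2 ^ n.
        M $$ (r, c) = (if qbit r i = qbit c i then M $$ (qclr r i, qclr c i) else 0))"

definition wt :: "nat \<Rightarrow> complex mat \<Rightarrow> nat" where
  "wt n M = card {i. i < n \<and> \<not> acts_trivially_on n i M}"

text \<open>Single-qubit Paulis: 0 = I, 1 = X, 2 = Y, 3 = Z; entry (row a, column b).\<close>
fun sigma :: "nat \<Rightarrow> bool \<Rightarrow> bool \<Rightarrow> complex" where
  "sigma 0 a b = (if a = b then 1 else 0)"
| "sigma (Suc 0) a b = (if a \<noteq> b then 1 else 0)"
| "sigma (Suc (Suc 0)) a b = (if a = b then 0 else if a then \<i> else - \<i>)"
| "sigma _ a b = (if a = b then (if a then -1 else 1) else 0)"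

definition pauli_op :: "nat \<Rightarrow> nat \<Rightarrow> (nat \<Rightarrow> nat) \<Rightarrow> complex mat" where
  "pauli_op n k p = mat (2 ^ n) (2 ^ n)
     (\<lambda>(r, c). \<i> ^ k * (\<Prod>j<n. sigma (p j) (qbit r j) (qbit c j)))"

definition pauli_group :: "nat \<Rightarrow> complex mat set" where
  "pauli_group n = {pauli_op n k p | k p. k < 4 \<and> (\<forall>j<n. p j < 4)}"

definition stabiliser_group :: "nat \<Rightarrow> complex mat set \<Rightarrow> bool" where
  "stabiliser_group n S \<longleftrightarrow>
     S \<subseteq> pauli_group n \<and> 1\<^sub>m (2 ^ n) \<in> S \<and>
     (\<forall>a\<in>S. \<forall>b\<in>S. a * b \<in> S) \<and>
     (\<forall>a\<in>S. \<forall>b\<in>S. a * b = b * a) \<and>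
     - 1\<^sub>m (2 ^ n) \<notin> S"

definition codespace :: "nat \<Rightarrow> complex mat set \<Rightarrow> complex vec set" where
  "codespace n S = {v \<in> carrier_vec (2 ^ n). \<forall>s\<in>S. s *\<^sub>v v = v}"

text \<open>A physical operator that (together with its adjoint) preserves the code space,
  i.e. commutes with the code projector; it represents the logical operator given
  by its restriction to the code space.\<close>
definition is_logical :: "nat \<Rightarrow> complex mat set \<Rightarrow> complex mat \<Rightarrow> bool" where
  "is_logical n S U \<longleftrightarrow> U \<in> carrier_mat (2 ^ n) (2 ^ n) \<and>
     (\<forall>v\<in>codespace n S. U *\<^sub>v v \<in> codespace n S \<and> mat_adjoint U *\<^sub>v v \<in> codespace n S)"

definition represents :: "nat \<Rightarrow> complex mat set \<Rightarrow> complex mat \<Rightarrow> complex mat \<Rightarrow> bool" where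
  "represents n S U L \<longleftrightarrow> is_logical n S U \<and> (\<forall>v\<in>codespace n S. U *\<^sub>v v = L *\<^sub>v v)"

definition logical_pauli :: "nat \<Rightarrow> complex mat set \<Rightarrow> complex mat \<Rightarrow> bool" where
  "logical_pauli n S L \<longleftrightarrow> is_logical n S L \<and> (\<exists>P\<in>pauli_group n. represents n S P L)"

definition logical_unitary :: "nat \<Rightarrow> complex mat set \<Rightarrow> complex mat \<Rightarrow> bool" where
  "logical_unitary n S A \<longleftrightarrow> is_logical n S A \<and>
     represents n S (A * mat_adjoint A) (1\<^sub>m (2 ^ n)) \<and>
     represents n S (mat_adjoint A * A) (1\<^sub>m (2 ^ n))"

definition log_dist :: "nat \<Rightarrow> complex mat set \<Rightarrow> complex mat \<Rightarrow> nat" where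
  "log_dist n S L = (LEAST w. \<exists>U. represents n S U L \<and> wt n U = w)"

definition code_dist :: "nat \<Rightarrow> complex mat set \<Rightarrow> nat" where
  "code_dist n S = (LEAST w. \<exists>P\<in>pauli_group n. is_logical n S P \<and>
      \<not> (\<exists>c. represents n S P (c \<cdot>\<^sub>m 1\<^sub>m (2 ^ n))) \<and> wt n P = w)"

definition stabiliser_family :: "(nat \<Rightarrow> nat) \<Rightarrow> (nat \<Rightarrow> complex mat set) \<Rightarrow> bool" where
  "stabiliser_family n S \<longleftrightarrow> (\<forall>l. stabiliser_group (n l) (S l))"

definition L_down :: "(nat \<Rightarrow> nat) \<Rightarrow> (nat \<Rightarrow> complex mat set) \<Rightarrow> (nat \<Rightarrow> complex mat) set" where
  "L_down n S = {L. (\<forall>l. is_logical (n l) (S l) (L l)) \<and>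
     (\<exists>C::real. \<forall>l. real (log_dist (n l) (S l) (L l)) / real (code_dist (n l) (S l)) \<le> C)}"

definition P_down :: "(nat \<Rightarrow> nat) \<Rightarrow> (nat \<Rightarrow> complex mat set) \<Rightarrow> (nat \<Rightarrow> complex mat) set" where
  "P_down n S = {L \<in> L_down n S. \<forall>l. logical_pauli (n l) (S l) (L l)}"

section \<open>Channels (Heisenberg picture, Kraus form) and implementations\<close>

definition is_channel :: "nat \<Rightarrow> complex mat list \<Rightarrow> bool" where
  "is_channel n Ks \<longleftrightarrow> (\<forall>K\<in>set Ks. K \<in> carrier_mat (2 ^ n) (2 ^ n)) \<and>
     foldr (\<lambda>K B. mat_adjoint K * K + B) Ks (0\<^sub>m (2 ^ n) (2 ^ n)) = 1\<^sub>m (2 ^ n)"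

definition chan_apply :: "nat \<Rightarrow> complex mat list \<Rightarrow> complex mat \<Rightarrow> complex mat" where
  "chan_apply n Ks U = foldr (\<lambda>K B. K * U * mat_adjoint K + B) Ks (0\<^sub>m (2 ^ n) (2 ^ n))"

definition implements :: "nat \<Rightarrow> complex mat set \<Rightarrow> complex mat list \<Rightarrow> complex mat \<Rightarrow> bool" where
  "implements n S Ks A \<longleftrightarrow> is_channel n Ks \<and>
     (\<forall>L U. is_logical n S L \<longrightarrow> represents n S U L \<longrightarrow>
        represents n S (chan_apply n Ks U) (A * L * mat_adjoint A))"

text \<open>Spread of E under the channel (with 0/0 = 0 for weight-zero E, i.e. phases times I).\<close>
definition spread_at :: "nat \<Rightarrow> complex mat list \<Rightarrow> complex mat \<Rightarrow> real" where
  "spread_at n Ks E = real (wt n (chan_apply n Ks E)) / real (wt n E)"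

definition spread :: "nat \<Rightarrow> complex mat list \<Rightarrow> real" where
  "spread n Ks = Max (spread_at n Ks ` pauli_group n)"

definition bounded_spread :: "(nat \<Rightarrow> nat) \<Rightarrow> (nat \<Rightarrow> complex mat list) \<Rightarrow> bool" where
  "bounded_spread n Ks \<longleftrightarrow> (\<exists>C::real. \<forall>l. spread (n l) (Ks l) \<le> C)"

end

theory Submission
  imports Defs
begin

lemma qbit_bit: "qbit r j = bit r j" by (simp add: qbit_def bit_iff_odd)
lemma qclr_unset: "qclr r j = unset_bit j r"
proof (cases "bit r j")
  case True
  have "set_bit j (unset_bit j r) = r" using True by (intro bit_eqI) (auto simp: bit_simps)
  moreover have "set_bit j (unset_bit j r) = unset_bit j r + 2^j"
    by (simp add: set_bit_eq bit_simps)
  ultimately show ?thesis using True unfolding qclr_def qbit_bit by simp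
next
  case False
  have "unset_bit j r = r" using False by (intro bit_eqI) (auto simp: bit_simps)
  then show ?thesis using False unfolding qclr_def qbit_bit by simp
qed
lemma less_pow2_iff: "(r::nat) < 2^n \<longleftrightarrow> (\<forall>j\<ge>n. \<not> bit r j)"
proof -
  have "r < 2^n \<longleftrightarrow> take_bit n r = r" by (rule take_bit_nat_eq_self_iff[symmetric])
  also have "\<dots> \<longleftrightarrow> (\<forall>j. bit (take_bit n r) j = bit r j)" 
  proof
    assume H: "\<forall>j. bit (take_bit n r) j = bit r j"
    show "take_bit n r = r" by (rule bit_eqI) (use H in blast)
  qed simp
  also have "\<dots> \<longleftrightarrow> (\<forall>j\<ge>n. \<not> bit r j)" unfolding bit_take_bit_iff by (metis not_le)
  finally show ?thesis .
qed
lemma bits_eq: "(r::nat) < 2^n \<Longrightarrow> c < 2^n \<Longrightarrow> (\<forall>j<n. bit r j = bit c j) \<Longrightarrow> r = c"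
  by (metis less_pow2_iff bit_eq_iff not_less)
lemma set_bit_less: "(r::nat) < 2^n \<Longrightarrow> i < n \<Longrightarrow> set_bit i r < 2^n"
  by (auto simp: less_pow2_iff bit_set_bit_iff)
lemma unset_bit_less: "(r::nat) < 2^n \<Longrightarrow> unset_bit i r < 2^n"
  by (auto simp: less_pow2_iff bit_unset_bit_iff)
lemma sum_double: "(\<Sum>m<2*K. f m) = (\<Sum>m<K. f m) + (\<Sum>m<K. f (m+K::nat)::'a::comm_monoid_add)"
proof -
  have "{..<2*K} = {..<K} \<union> {K..<2*K}" by auto
  moreover have "(\<Sum>m\<in>{..<K} \<union> {K..<2*K}. f m) = (\<Sum>m<K. f m) + (\<Sum>m\<in>{K..<2*K}. f m)"
    by (rule sum.union_disjoint) auto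
  ultimately have "(\<Sum>m<2*K. f m) = (\<Sum>m<K. f m) + (\<Sum>m\<in>{K..<2*K}. f m)" by simp
  also have "(\<Sum>m\<in>{K..<2*K}. f m) = (\<Sum>m<K. f (m+K))"
    using sum.shift_bounds_nat_ivl[of f 0 K K] by (simp add: lessThan_atLeast0 mult_2)
  finally show ?thesis .
qed
lemma bitsum_prod:
  "(\<Sum>m<2^n. \<Prod>j<n. h j (bit (m::nat) j)) = (\<Prod>j<n. h j False + h j True :: 'a::comm_semiring_1)"
proof (induction n)
  case 0 then show ?case by simp
next
  case (Suc n)
  have A: "(\<Prod>j<Suc n. h j (bit m j)) = (\<Prod>j<n. h j (bit m j)) * h n False" if "m < 2^n" for m :: nat
  proof -
    have "\<not> bit m n" using that less_pow2_iff by blast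
    then show ?thesis by simp
  qed
  have B: "(\<Prod>j<Suc n. h j (bit (m + 2^n) j)) = (\<Prod>j<n. h j (bit m j)) * h n True" if "m < 2^n" for m :: nat
  proof -
    have "\<not> bit m n" using that less_pow2_iff by blast
    then have e: "m + 2^n = set_bit n m" by (simp add: set_bit_eq)
    show ?thesis unfolding e by (simp add: bit_set_bit_iff)
  qed
  have "(\<Sum>m::nat<2^Suc n. \<Prod>j<Suc n. h j (bit m j)) =
     (\<Sum>m::nat<2^n. \<Prod>j<Suc n. h j (bit m j)) + (\<Sum>m::nat<2^n. \<Prod>j<Suc n. h j (bit (m+2^n) j))"
    using sum_double[of "\<lambda>m::nat. \<Prod>j<Suc n. h j (bit m j)" "2^n"] by (simp only: power_Suc)
  also have "\<dots> = (\<Sum>m::nat<2^n. (\<Prod>j<n. h j (bit m j)) * h n False) + (\<Sum>m::nat<2^n. (\<Prod>j<n. h j (bit m j)) * h n True)"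
    using A B by (intro arg_cong2[where f="(+)"] sum.cong) auto
  also have "\<dots> = (\<Prod>j<n. h j False + h j True) * (h n False + h n True)"
    by (simp only: Suc.IH flip: sum_distrib_right distrib_left)
  finally show ?case by (simp only: prod.lessThan_Suc)
qed


lemma mult_entry: "A \<in> carrier_mat N N \<Longrightarrow> B \<in> carrier_mat N N \<Longrightarrow> r < N \<Longrightarrow> c < N \<Longrightarrow>
  (A * B) $$ (r, c) = (\<Sum>m<N. A $$ (r, m) * B $$ (m, c))"
  by (simp add: scalar_prod_def atLeast0LessThan)

lemma adj_carrier: "A \<in> carrier_mat N N \<Longrightarrow> mat_adjoint A \<in> carrier_mat N N"
  unfolding mat_adjoint_def carrier_mat_def by simp

lemma adj_entry: "A \<in> carrier_mat N N \<Longrightarrow> r < N \<Longrightarrow> c < N \<Longrightarrow>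
  mat_adjoint A $$ (r, c) = cnj (A $$ (c, r))"
  by (simp add: mat_adjoint_def mat_of_rows_index)

lemma pauli_carrier: "pauli_op n k p \<in> carrier_mat (2^n) (2^n)"
  by (simp add: pauli_op_def)

lemma pauli_entry: "r < 2^n \<Longrightarrow> c < 2^n \<Longrightarrow>
  pauli_op n k p $$ (r, c) = \<i> ^ k * (\<Prod>j<n. sigma (p j) (bit r j) (bit c j))"
  by (simp add: pauli_op_def qbit_bit)

definition pm :: "nat \<Rightarrow> nat \<Rightarrow> nat" where
  "pm a b = (if a = 0 then b else if b = 0 then a else if a = b then 0 else 6 - a - b)"

definition ph :: "nat \<Rightarrow> nat \<Rightarrow> nat" where
  "ph a b = (if (a = 1 \<and> b = 2) \<or> (a = 2 \<and> b = 3) \<or> (a = 3 \<and> b = 1) then 1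
     else if (a = 2 \<and> b = 1) \<or> (a = 3 \<and> b = 2) \<or> (a = 1 \<and> b = 3) then 3 else 0)"

lemma four_cases: "(a::nat) < 4 \<Longrightarrow> a = 0 \<or> a = 1 \<or> a = 2 \<or> a = 3" by auto

lemma sigma_mult: "a < 4 \<Longrightarrow> b < 4 \<Longrightarrow>
  sigma a r False * sigma b False c + sigma a r True * sigma b True c = \<i> ^ ph a b * sigma (pm a b) r c"
  apply (drule four_cases, drule four_cases)
  apply (cases r; cases c; elim disjE; simp add: ph_def pm_def numeral_eq_Suc power3_eq_cube)
  done

lemma pm_less: "a < 4 \<Longrightarrow> b < 4 \<Longrightarrow> pm a b < 4"
  by (auto simp: pm_def)

lemma sigma_herm: "cnj (sigma a x y) = sigma a y x"
  by (cases "(a, x, y)" rule: sigma.cases) auto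

lemma pauli_mult:
  assumes p: "\<forall>j<n. p j < 4" and q: "\<forall>j<n. q j < 4"
  shows "pauli_op n k p * pauli_op n k' q =
    pauli_op n (k + k' + (\<Sum>j<n. ph (p j) (q j))) (\<lambda>j. pm (p j) (q j))"
proof (rule eq_matI)
  fix r c assume "r < dim_row (pauli_op n (k + k' + (\<Sum>j<n. ph (p j) (q j))) (\<lambda>j. pm (p j) (q j)))"
    "c < dim_col (pauli_op n (k + k' + (\<Sum>j<n. ph (p j) (q j))) (\<lambda>j. pm (p j) (q j)))"
  then have r: "r < 2^n" and c: "c < 2^n" by (auto simp: pauli_op_def)
  have "(pauli_op n k p * pauli_op n k' q) $$ (r, c) =
      (\<Sum>m<2^n. pauli_op n k p $$ (r, m) * pauli_op n k' q $$ (m, c))"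
    by (rule mult_entry[OF pauli_carrier pauli_carrier r c])
  also have "\<dots> = (\<Sum>m::nat<2^n. (\<i>^k * \<i>^k') * (\<Prod>j<n. sigma (p j) (bit r j) (bit m j) * sigma (q j) (bit m j) (bit c j)))"
    by (rule sum.cong) (auto simp: pauli_entry r c prod.distrib)
  also have "\<dots> = (\<i>^k * \<i>^k') * (\<Prod>j<n. sigma (p j) (bit r j) False * sigma (q j) False (bit c j) + sigma (p j) (bit r j) True * sigma (q j) True (bit c j))"
    by (simp only: bitsum_prod[where h="\<lambda>j x. sigma (p j) (bit r j) x * sigma (q j) x (bit c j)" and n=n] flip: sum_distrib_left)
  also have "\<dots> = (\<i>^k * \<i>^k') * (\<Prod>j<n. \<i> ^ ph (p j) (q j) * sigma (pm (p j) (q j)) (bit r j) (bit c j))"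
    using p q by (intro arg_cong2[where f="(*)"] prod.cong refl sigma_mult) auto
  also have "\<dots> = pauli_op n (k + k' + (\<Sum>j<n. ph (p j) (q j))) (\<lambda>j. pm (p j) (q j)) $$ (r, c)"
    by (simp add: pauli_entry r c prod.distrib power_add power_sum)
  finally show "(pauli_op n k p * pauli_op n k' q) $$ (r, c) =
    pauli_op n (k + k' + (\<Sum>j<n. ph (p j) (q j))) (\<lambda>j. pm (p j) (q j)) $$ (r, c)" .
qed (auto simp: pauli_op_def)

lemma pauli_adj: "mat_adjoint (pauli_op n k p) = pauli_op n (3 * k) p"
proof (rule eq_matI)
  fix r c assume "r < dim_row (pauli_op n (3 * k) p)" "c < dim_col (pauli_op n (3 * k) p)"
  then have r: "r < 2^n" and c: "c < 2^n" by (auto simp: pauli_op_def)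
  have "cnj (\<i> ^ k) = \<i> ^ (3 * k)"
    by (simp add: power_mult power3_eq_cube)
  then show "mat_adjoint (pauli_op n k p) $$ (r, c) = pauli_op n (3 * k) p $$ (r, c)"
    by (simp add: adj_entry[OF pauli_carrier r c] pauli_entry r c sigma_herm)
qed (auto simp: mat_adjoint_def pauli_op_def)

lemma pauli_zero: "\<forall>j<n. p j = 0 \<Longrightarrow> pauli_op n k p = (\<i> ^ k) \<cdot>\<^sub>m 1\<^sub>m (2^n)"
proof (rule eq_matI)
  fix r c assume z: "\<forall>j<n. p j = 0" and "r < dim_row ((\<i> ^ k) \<cdot>\<^sub>m 1\<^sub>m (2^n))" "c < dim_col ((\<i> ^ k) \<cdot>\<^sub>m 1\<^sub>m (2^n) :: complex mat)"
  then have r: "r < 2^n" and c: "c < 2^n" by auto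
  have "(\<Prod>j<n. sigma (p j) (bit r j) (bit c j)) = (\<Prod>j<n. if bit r j = bit c j then 1 else 0)"
    using z by (intro prod.cong) auto
  also have "\<dots> = (if r = c then 1 else 0)"
  proof (cases "r = c")
    case False
    then obtain j where "j < n" "bit r j \<noteq> bit c j" using bits_eq[OF r c] by blast
    then have "(\<Prod>j<n. if bit r j = bit c j then 1 else (0::complex)) = 0"
      by (intro prod_zero) auto
    then show ?thesis using False by simp
  qed simp
  finally show "pauli_op n k p $$ (r, c) = ((\<i> ^ k) \<cdot>\<^sub>m 1\<^sub>m (2^n)) $$ (r, c)"
    by (simp add: pauli_entry r c)
qed (auto simp: pauli_op_def)

lemma ipow_mod: "\<i> ^ k = \<i> ^ (k mod 4)"
proof -
  have "\<i> ^ k = \<i> ^ (4 * (k div 4) + k mod 4)" by (simp only: mult_div_mod_eq)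
  also have "\<dots> = \<i> ^ (k mod 4)" by (simp only: power_add power_mult) simp
  finally show ?thesis .
qed

lemma pauli_mod: "pauli_op n k p = pauli_op n (k mod 4) p"
  unfolding pauli_op_def using ipow_mod[of k] by simp

lemma pauli_restrict: "pauli_op n k p = pauli_op n k (\<lambda>j. if j < n then p j else 0)"
  unfolding pauli_op_def by (intro cong_mat refl) (auto intro!: prod.cong)

definition PS :: "nat set \<Rightarrow> (nat \<Rightarrow> nat) set" where
  "PS T = {f. \<forall>x. (x \<in> T \<longrightarrow> f x \<in> {..<4}) \<and> (x \<notin> T \<longrightarrow> f x = 0)}"

lemma PS_finite: "finite T \<Longrightarrow> finite (PS T)"
  unfolding PS_def by (rule finite_set_of_finite_funs) auto

lemma pg_intro: "k < 4 \<Longrightarrow> \<forall>j<n. p j < 4 \<Longrightarrow> pauli_op n k p \<in> pauli_group n"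
  unfolding pauli_group_def by blast

lemma pg_carrier: "A \<in> pauli_group n \<Longrightarrow> A \<in> carrier_mat (2^n) (2^n)"
  by (auto simp: pauli_group_def pauli_carrier)

lemma pg_finite: "finite (pauli_group n)"
proof -
  have "pauli_group n \<subseteq> (\<lambda>(k, p). pauli_op n k p) ` ({..<4} \<times> PS {..<n})"
  proof
    fix A assume "A \<in> pauli_group n"
    then obtain k p where A: "A = pauli_op n k p" "k < 4" "\<forall>j<n. p j < 4"
      unfolding pauli_group_def by blast
    then have "(k, (\<lambda>j. if j < n then p j else 0)) \<in> {..<4} \<times> PS {..<n}"
      by (auto simp: PS_def)
    moreover have "A = (\<lambda>(k, p). pauli_op n k p) (k, (\<lambda>j. if j < n then p j else 0))"
      using A pauli_restrict by simp
    ultimately show "A \<in> (\<lambda>(k, p). pauli_op n k p) ` ({..<4} \<times> PS {..<n})" by blast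
  qed
  moreover have "finite ({..<4::nat} \<times> PS {..<n})" using PS_finite by auto
  ultimately show ?thesis using finite_subset by blast
qed

lemma pg_mult: "A \<in> pauli_group n \<Longrightarrow> B \<in> pauli_group n \<Longrightarrow> A * B \<in> pauli_group n"
proof -
  assume "A \<in> pauli_group n" "B \<in> pauli_group n"
  then obtain k p k' q where A: "A = pauli_op n k p" "\<forall>j<n. p j < 4"
    and B: "B = pauli_op n k' q" "\<forall>j<n. q j < 4"
    unfolding pauli_group_def by blast
  have "A * B = pauli_op n ((k + k' + (\<Sum>j<n. ph (p j) (q j))) mod 4) (\<lambda>j. pm (p j) (q j))"
    using A B pauli_mult pauli_mod by metis
  moreover have "\<forall>j<n. pm (p j) (q j) < 4" using A B pm_less by auto
  ultimately show ?thesis using pg_intro by simp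
qed

lemma pg_adj: "A \<in> pauli_group n \<Longrightarrow> mat_adjoint A \<in> pauli_group n"
proof -
  assume "A \<in> pauli_group n"
  then obtain k p where A: "A = pauli_op n k p" "\<forall>j<n. p j < 4"
    unfolding pauli_group_def by blast
  have "mat_adjoint A = pauli_op n ((3 * k) mod 4) p"
    using A pauli_adj pauli_mod by metis
  then show ?thesis using A pg_intro by simp
qed

lemma pg_unitary:
  assumes "A \<in> pauli_group n"
  shows "mat_adjoint A * A = 1\<^sub>m (2^n)" "A * mat_adjoint A = 1\<^sub>m (2^n)"
proof -
  obtain k p where A: "A = pauli_op n k p" "\<forall>j<n. p j < 4"
    using assms unfolding pauli_group_def by blast
  have ph0: "ph a a = 0" for a by (simp add: ph_def)
  have pm0: "pm a a = 0" for a by (simp add: pm_def)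
  have i4: "\<i> ^ (4 * k) = 1" by (simp add: power_mult)
  have "mat_adjoint A * A = pauli_op n (3 * k + k + (\<Sum>j<n. ph (p j) (p j))) (\<lambda>j. pm (p j) (p j))"
    using A pauli_adj pauli_mult by metis
  also have "\<dots> = 1\<^sub>m (2^n)" by (subst pauli_zero) (auto simp: ph0 pm0 i4)
  finally show "mat_adjoint A * A = 1\<^sub>m (2^n)" .
  have "A * mat_adjoint A = pauli_op n (k + 3 * k + (\<Sum>j<n. ph (p j) (p j))) (\<lambda>j. pm (p j) (p j))"
    using A pauli_adj pauli_mult by metis
  also have "\<dots> = 1\<^sub>m (2^n)" by (subst pauli_zero) (auto simp: ph0 pm0 i4[unfolded mult.commute[of 4]] algebra_simps)
  finally show "A * mat_adjoint A = 1\<^sub>m (2^n)" .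
qed

lemma pauli_triv:
  assumes pj: "p j = 0"
  shows "acts_trivially_on n j (pauli_op n k p)"
  unfolding acts_trivially_on_def qbit_bit qclr_unset
proof (intro allI impI)
  fix r c :: nat assume r: "r < 2^n" and c: "c < 2^n"
  have r': "unset_bit j r < 2^n" and c': "unset_bit j c < 2^n" using r c unset_bit_less by auto
  have key: "(\<Prod>l<n. sigma (p l) (bit r l) (bit c l)) =
    (if bit r j = bit c j then (\<Prod>l<n. sigma (p l) (bit (unset_bit j r) l) (bit (unset_bit j c) l)) else 0)"
  proof (cases "j < n")
    case True
    have split: "(\<Prod>l<n. f l) = f j * (\<Prod>l\<in>{..<n}-{j}. f l)" for f :: "nat \<Rightarrow> complex"
      using True by (subst prod.remove[of _ j]) auto
    have eqrest: "(\<Prod>l\<in>{..<n}-{j}. sigma (p l) (bit (unset_bit j r) l) (bit (unset_bit j c) l)) =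
        (\<Prod>l\<in>{..<n}-{j}. sigma (p l) (bit r l) (bit c l))"
      by (intro prod.cong refl) (auto simp: bit_unset_bit_iff)
    have u: "\<not> bit (unset_bit j r) j" "\<not> bit (unset_bit j c) j" by (auto simp: bit_unset_bit_iff)
    show ?thesis
      apply (subst (1 2) split)
      using u pj eqrest by simp
  next
    case False
    have "\<not> bit r j" "\<not> bit c j" using r c False less_pow2_iff by auto
    moreover have "unset_bit j r = r" "unset_bit j c = c"
      using calculation by (auto intro!: bit_eqI simp: bit_unset_bit_iff)
    ultimately show ?thesis by simp
  qed
  show "pauli_op n k p $$ (r, c) = (if bit r j = bit c j then pauli_op n k p $$ (unset_bit j r, unset_bit j c) else 0)"
    using key by (simp add: pauli_entry r c r' c')
qed



definition mytr :: "nat \<Rightarrow> complex mat \<Rightarrow> complex" where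
  "mytr N M = (\<Sum>r<N. M $$ (r, r))"

lemma pauli_trace: "mytr (2^n) (pauli_op n k p) = \<i> ^ k * (\<Prod>j<n. sigma (p j) False False + sigma (p j) True True)"
proof -
  have "mytr (2^n) (pauli_op n k p) = (\<Sum>r::nat<2^n. \<i> ^ k * (\<Prod>j<n. sigma (p j) (bit r j) (bit r j)))"
    unfolding mytr_def by (intro sum.cong refl) (simp add: pauli_entry)
  also have "\<dots> = \<i> ^ k * (\<Prod>j<n. sigma (p j) False False + sigma (p j) True True)"
    by (simp only: bitsum_prod[where h="\<lambda>j x. sigma (p j) x x" and n=n] flip: sum_distrib_left)
  finally show ?thesis .
qed

lemma pauli_trace_nz:
  assumes "\<forall>j<n. p j < 4" "mytr (2^n) (pauli_op n k p) \<noteq> 0"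
  shows "\<forall>j<n. p j = 0"
proof (intro allI impI)
  fix j assume j: "j < n"
  show "p j = 0"
  proof (rule ccontr)
    assume "p j \<noteq> 0"
    then have "sigma (p j) False False + sigma (p j) True True = 0"
      using assms(1) j by (cases "(p j, False, False)" rule: sigma.cases) auto
    then have "(\<Prod>j<n. sigma (p j) False False + sigma (p j) True True) = 0"
      using j by (intro prod_zero) auto
    then show False using assms(2) by (simp add: pauli_trace)
  qed
qed

lemma bits_ext: "(\<And>l. bit (a::nat) l = bit b l) \<Longrightarrow> a = b"
  by (rule bit_eqI) simp

lemma triv_all:
  assumes M: "M \<in> carrier_mat (2^n) (2^n)" and T: "\<forall>j<n. acts_trivially_on n j M"
  shows "M = M $$ (0, 0) \<cdot>\<^sub>m 1\<^sub>m (2^n)"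
proof -
  have T': "\<And>j r c. j < n \<Longrightarrow> r < 2^n \<Longrightarrow> c < 2^n \<Longrightarrow>
      M $$ (r, c) = (if bit r j = bit c j then M $$ (unset_bit j r, unset_bit j c) else 0)"
  proof -
    fix j r c assume a: "j < n" "r < (2::nat)^n" "c < (2::nat)^n"
    have "acts_trivially_on n j M" using T a(1) by blast
    then show "M $$ (r, c) = (if bit r j = bit c j then M $$ (unset_bit j r, unset_bit j c) else 0)"
      unfolding acts_trivially_on_def qbit_bit qclr_unset using a(2,3) by blast
  qed
  have diag: "r < 2^n \<Longrightarrow> M $$ (r, r) = M $$ (0, 0)" for r
  proof (induction r rule: less_induct)
    case (less r)
    show ?case
    proof (cases "r = 0")
      case False
      have "\<exists>j<n. bit r j"
      proof (rule ccontr)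
        assume "\<not> (\<exists>j<n. bit r j)"
        then have "\<forall>j<n. bit r j = bit (0::nat) j" by simp
        then have "r = 0" using bits_eq[OF less.prems, of 0] by simp
        then show False using False by simp
      qed
      then obtain j where j: "j < n" "bit r j" by blast
      have "unset_bit j r = r - 2^j"
        using j(2) qclr_unset[of r j] unfolding qclr_def qbit_bit by auto
      moreover have "r - 2^j < r" using False by (intro diff_less) auto
      ultimately have lt: "unset_bit j r < r" by simp
      have "M $$ (r, r) = M $$ (unset_bit j r, unset_bit j r)" using T'[OF j(1) less.prems less.prems] by simp
      also have "\<dots> = M $$ (0, 0)" using less.IH[OF lt] lt less.prems by simp
      finally show ?thesis .
    qed simp
  qed
  show ?thesis
  proof (rule eq_matI)
    fix r c assume "r < dim_row (M $$ (0, 0) \<cdot>\<^sub>m 1\<^sub>m (2^n))" "c < dim_col (M $$ (0, 0) \<cdot>\<^sub>m 1\<^sub>m (2^n))"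
    then have r: "r < 2^n" and c: "c < 2^n" by simp_all
    show "M $$ (r, c) = (M $$ (0, 0) \<cdot>\<^sub>m 1\<^sub>m (2^n)) $$ (r, c)"
    proof (cases "r = c")
      case True
      have "M $$ (r, r) = M $$ (0, 0)" using diag[OF r] .
      then show ?thesis using True r by simp
    next
      case False
      then obtain j where j: "j < n" "bit r j \<noteq> bit c j" using bits_eq[OF r c] by blast
      then have "M $$ (r, c) = 0" using T'[OF j(1) r c] by simp
      then show ?thesis using r c False by simp
    qed
  qed (use M in auto)
qed

definition sb :: "nat \<Rightarrow> nat \<Rightarrow> bool \<Rightarrow> nat" where
  "sb r i x = (if x then set_bit i r else unset_bit i r)"

lemma sb_bit: "bit (sb r i x) l = (if l = i then x else bit r l)"
  unfolding sb_def by (auto simp: bit_set_bit_iff bit_unset_bit_iff)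

lemma sb_less: "r < 2^n \<Longrightarrow> i < n \<Longrightarrow> sb r i x < 2^n"
  unfolding sb_def using set_bit_less unset_bit_less by auto

lemma sb_self: "sb r i (bit r i) = r"
  by (rule bits_ext) (simp add: sb_bit)

lemma sb_unset: "sb (unset_bit i r) i x = sb r i x"
  by (rule bits_ext) (simp add: sb_bit bit_unset_bit_iff)

lemma sb_unset_j: "j \<noteq> i \<Longrightarrow> unset_bit j (sb r i x) = sb (unset_bit j r) i x"
  by (rule bits_ext) (auto simp: sb_bit bit_unset_bit_iff)



definition dec :: "nat \<Rightarrow> complex mat \<Rightarrow> nat \<Rightarrow> nat \<Rightarrow> complex mat" where
  "dec n M i k = mat (2^n) (2^n) (\<lambda>(r, c). if bit r i = bit c i then
     (sigma k False False * M $$ (sb r i False, sb c i False) + sigma k True False * M $$ (sb r i False, sb c i True)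
    + sigma k False True * M $$ (sb r i True, sb c i False) + sigma k True True * M $$ (sb r i True, sb c i True)) / 2
     else 0)"

lemma dec_carrier: "dec n M i k \<in> carrier_mat (2^n) (2^n)"
  by (simp add: dec_def)

lemma dec_entry: "r < 2^n \<Longrightarrow> c < 2^n \<Longrightarrow> dec n M i k $$ (r, c) = (if bit r i = bit c i then
     (sigma k False False * M $$ (sb r i False, sb c i False) + sigma k True False * M $$ (sb r i False, sb c i True)
    + sigma k False True * M $$ (sb r i True, sb c i False) + sigma k True True * M $$ (sb r i True, sb c i True)) / 2
     else 0)"
  by (simp add: dec_def)

lemma four_set: "{..<4::nat} = {0, 1, 2, 3}" by auto

lemma qubit_complete:
  "(\<Sum>k<4. sigma k a b * ((sigma k False False * m00 + sigma k True False * m01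
     + sigma k False True * m10 + sigma k True True * m11) / 2)) =
   (if a then (if b then m11 else m10) else (if b then m01 else m00))"
  unfolding four_set by (cases a; cases b; simp add: numeral_eq_Suc field_simps)

lemma dec_recon:
  assumes r: "r < 2^n" and c: "c < 2^n" and i: "i < n"
  shows "M $$ (r, c) = (\<Sum>k<4. sigma k (bit r i) (bit c i) * dec n M i k $$ (unset_bit i r, unset_bit i c))"
proof -
  have r': "unset_bit i r < 2^n" and c': "unset_bit i c < 2^n" using r c unset_bit_less by auto
  have u: "bit (unset_bit i r) i = bit (unset_bit i c) i" by (simp add: bit_unset_bit_iff)
  have "(\<Sum>k<4. sigma k (bit r i) (bit c i) * dec n M i k $$ (unset_bit i r, unset_bit i c)) =
    (\<Sum>k<4. sigma k (bit r i) (bit c i) * ((sigma k False False * M $$ (sb r i False, sb c i False) + sigma k True False * M $$ (sb r i False, sb c i True)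
    + sigma k False True * M $$ (sb r i True, sb c i False) + sigma k True True * M $$ (sb r i True, sb c i True)) / 2))"
    by (intro sum.cong refl) (simp only: dec_entry[OF r' c'] u sb_unset, simp)
  also have "\<dots> = M $$ (sb r i (bit r i), sb c i (bit c i))"
    by (subst qubit_complete) (cases "bit r i"; cases "bit c i"; simp)
  finally show ?thesis by (simp add: sb_self)
qed

lemma dec_triv_i: "acts_trivially_on n i (dec n M i k)"
  unfolding acts_trivially_on_def qbit_bit qclr_unset
proof (intro allI impI)
  fix r c :: nat assume r: "r < 2^n" and c: "c < 2^n"
  have r': "unset_bit i r < 2^n" and c': "unset_bit i c < 2^n" using r c unset_bit_less by auto
  have u: "bit (unset_bit i r) i = bit (unset_bit i c) i" by (simp add: bit_unset_bit_iff)
  show "dec n M i k $$ (r, c) = (if bit r i = bit c i then dec n M i k $$ (unset_bit i r, unset_bit i c) else 0)"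
    by (simp only: dec_entry[OF r c] dec_entry[OF r' c'] u if_True sb_unset) simp
qed

lemma triv_entry:
  assumes "acts_trivially_on n j M" "r < 2^n" "c < 2^n"
  shows "M $$ (r, c) = (if bit r j = bit c j then M $$ (unset_bit j r, unset_bit j c) else 0)"
  using assms unfolding acts_trivially_on_def qbit_bit qclr_unset by blast

lemma dec_triv_j:
  assumes j: "j \<noteq> i" and i: "i < n" and T: "acts_trivially_on n j M"
  shows "acts_trivially_on n j (dec n M i k)"
  unfolding acts_trivially_on_def qbit_bit qclr_unset
proof (intro allI impI)
  fix r c :: nat assume r: "r < 2^n" and c: "c < 2^n"
  have r': "unset_bit j r < 2^n" and c': "unset_bit j c < 2^n" using r c unset_bit_less by auto
  have ui: "bit (unset_bit j r) i = bit r i" "bit (unset_bit j c) i = bit c i"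
    using j by (auto simp: bit_unset_bit_iff)
  have sbl: "sb r i x < 2^n" "sb c i x < 2^n" for x using sb_less r c i by auto
  have sbj: "bit (sb r i x) j = bit r j" "bit (sb c i x) j = bit c j" for x using j by (auto simp: sb_bit)
  show "dec n M i k $$ (r, c) = (if bit r j = bit c j then dec n M i k $$ (unset_bit j r, unset_bit j c) else 0)"
  proof (cases "bit r i = bit c i")
    case False
    then show ?thesis by (simp add: dec_entry[OF r c] dec_entry[OF r' c'] ui)
  next
    case True
    show ?thesis
    proof (cases "bit r j = bit c j")
      case False
      have z: "M $$ (sb r i x, sb c i y) = 0" for x y
        using triv_entry[OF T sbl(1)[of x] sbl(2)[of y]] False by (simp add: sbj)
      show ?thesis using True False by (simp add: dec_entry[OF r c] z)
    next
      case eqj: True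
      have z: "M $$ (sb r i x, sb c i y) = M $$ (sb (unset_bit j r) i x, sb (unset_bit j c) i y)" for x y
        using triv_entry[OF T sbl(1)[of x] sbl(2)[of y]] eqj by (simp add: sbj sb_unset_j[OF j])
      show ?thesis using True eqj by (simp add: dec_entry[OF r c] dec_entry[OF r' c'] ui z)
    qed
  qed
qed

lemma pauli_upd:
  assumes pi: "p i = 0" and i: "i < n" and r: "r < 2^n" and c: "c < 2^n"
  shows "sigma k (bit r i) (bit c i) * pauli_op n 0 p $$ (unset_bit i r, unset_bit i c) = pauli_op n 0 (p(i:=k)) $$ (r, c)"
proof -
  have r': "unset_bit i r < 2^n" and c': "unset_bit i c < 2^n" using r c unset_bit_less by auto
  have split: "(\<Prod>l<n. f l) = f i * (\<Prod>l\<in>{..<n}-{i}. f l)" for f :: "nat \<Rightarrow> complex"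
    using i by (subst prod.remove[of _ i]) auto
  have eqrest: "(\<Prod>l\<in>{..<n}-{i}. sigma (p l) (bit (unset_bit i r) l) (bit (unset_bit i c) l)) =
      (\<Prod>l\<in>{..<n}-{i}. sigma ((p(i:=k)) l) (bit r l) (bit c l))"
    by (intro prod.cong refl) (auto simp: bit_unset_bit_iff)
  have u: "\<not> bit (unset_bit i r) i" "\<not> bit (unset_bit i c) i" by (auto simp: bit_unset_bit_iff)
  show ?thesis
    unfolding pauli_entry[OF r c] pauli_entry[OF r' c']
    apply (subst (1 2) split)
    using u pi eqrest by simp
qed



lemma PS_empty: "PS {} = {\<lambda>_. 0}"
  unfolding PS_def by auto

lemma PS_insert_bij:
  assumes "i \<notin> T"
  shows "inj_on (\<lambda>(k, p). p(i := k)) ({..<4} \<times> PS T)"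
    and "(\<lambda>(k, p). p(i := k)) ` ({..<4} \<times> PS T) = PS (insert i T)"
proof -
  show "inj_on (\<lambda>(k, p). p(i := k)) ({..<4} \<times> PS T)"
  proof (rule inj_onI, clarify)
    fix k p k' p' assume "p \<in> PS T" "p' \<in> PS T" and eq: "p(i := k) = p'(i := k')"
    then have "p i = 0" "p' i = 0" using assms unfolding PS_def by auto
    moreover have "k = k'" using fun_cong[OF eq, of i] by simp
    moreover have "p x = p' x" if "x \<noteq> i" for x using fun_cong[OF eq, of x] that by simp
    ultimately show "k = k' \<and> p = p'" by (metis ext)
  qed
  show "(\<lambda>(k, p). p(i := k)) ` ({..<4} \<times> PS T) = PS (insert i T)"
  proof
    show "(\<lambda>(k, p). p(i := k)) ` ({..<4} \<times> PS T) \<subseteq> PS (insert i T)"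
      unfolding PS_def by auto
    show "PS (insert i T) \<subseteq> (\<lambda>(k, p). p(i := k)) ` ({..<4} \<times> PS T)"
    proof
      fix q assume q: "q \<in> PS (insert i T)"
      then have "(q i, q(i := 0)) \<in> {..<4} \<times> PS T" using assms unfolding PS_def by auto
      moreover have "q = (\<lambda>(k, p). p(i := k)) (q i, q(i := 0))" by simp
      ultimately show "q \<in> (\<lambda>(k, p). p(i := k)) ` ({..<4} \<times> PS T)" by blast
    qed
  qed
qed

lemma complete:
  "finite T \<Longrightarrow> T \<subseteq> {..<n} \<Longrightarrow> M \<in> carrier_mat (2^n) (2^n) \<Longrightarrow>
   (\<forall>j<n. j \<notin> T \<longrightarrow> acts_trivially_on n j M) \<Longrightarrow>
   \<exists>cf. \<forall>r c. r < 2^n \<longrightarrow> c < 2^n \<longrightarrow> M $$ (r, c) = (\<Sum>p\<in>PS T. cf p * pauli_op n 0 p $$ (r, c))"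
proof (induction T arbitrary: M rule: finite_induct)
  case empty
  have M: "M = M $$ (0, 0) \<cdot>\<^sub>m 1\<^sub>m (2^n)" using triv_all empty by auto
  have one: "(1::complex) \<cdot>\<^sub>m 1\<^sub>m (2^n) = 1\<^sub>m (2^n)" by (rule eq_matI) auto
  have Q: "pauli_op n 0 (\<lambda>_. 0) = 1\<^sub>m (2^n)" using pauli_zero[of n "\<lambda>_. 0" 0] one by simp
  show ?case
  proof (intro exI allI impI)
    fix r c :: nat assume r: "r < 2^n" and c: "c < 2^n"
    have "M $$ (r, c) = (M $$ (0, 0) \<cdot>\<^sub>m 1\<^sub>m (2^n)) $$ (r, c)" using M by (metis (no_types))
    also have "\<dots> = M $$ (0, 0) * pauli_op n 0 (\<lambda>_. 0) $$ (r, c)" using r c by (simp add: Q)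
    finally show "M $$ (r, c) = (\<Sum>p\<in>PS {}. (\<lambda>_. M $$ (0, 0)) p * pauli_op n 0 p $$ (r, c))"
      by (simp add: PS_empty)
  qed
next
  case (insert i T)
  have i: "i < n" and Tn: "T \<subseteq> {..<n}" using insert.prems by auto
  have "\<forall>k. \<exists>cf. \<forall>r c. r < 2^n \<longrightarrow> c < 2^n \<longrightarrow>
      dec n M i k $$ (r, c) = (\<Sum>p\<in>PS T. cf p * pauli_op n 0 p $$ (r, c))"
  proof
    fix k
    have "\<forall>j<n. j \<notin> T \<longrightarrow> acts_trivially_on n j (dec n M i k)"
    proof (intro allI impI)
      fix j assume "j < n" "j \<notin> T"
      show "acts_trivially_on n j (dec n M i k)"
      proof (cases "j = i")
        case True then show ?thesis using dec_triv_i by simp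
      next
        case False
        then have "acts_trivially_on n j M" using insert.prems \<open>j < n\<close> \<open>j \<notin> T\<close> by auto
        then show ?thesis using dec_triv_j[OF False i] by blast
      qed
    qed
    then show "\<exists>cf. \<forall>r c. r < 2^n \<longrightarrow> c < 2^n \<longrightarrow>
      dec n M i k $$ (r, c) = (\<Sum>p\<in>PS T. cf p * pauli_op n 0 p $$ (r, c))"
      using insert.IH[OF Tn dec_carrier] by blast
  qed
  then obtain cfs where cfs: "\<And>k r c. r < 2^n \<Longrightarrow> c < 2^n \<Longrightarrow>
      dec n M i k $$ (r, c) = (\<Sum>p\<in>PS T. cfs k p * pauli_op n 0 p $$ (r, c))"
    by metis
  define cf' where "cf' q = cfs (q i) (q(i := 0))" for q
  have pi: "p i = 0" if "p \<in> PS T" for p using that insert.hyps unfolding PS_def by auto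
  show ?case
  proof (intro exI allI impI)
    fix r c :: nat assume r: "r < 2^n" and c: "c < 2^n"
    have r': "unset_bit i r < 2^n" and c': "unset_bit i c < 2^n" using r c unset_bit_less by auto
    have "M $$ (r, c) = (\<Sum>k<4. sigma k (bit r i) (bit c i) * dec n M i k $$ (unset_bit i r, unset_bit i c))"
      by (rule dec_recon[OF r c i])
    also have "\<dots> = (\<Sum>k<4. \<Sum>p\<in>PS T. cfs k p * (sigma k (bit r i) (bit c i) * pauli_op n 0 p $$ (unset_bit i r, unset_bit i c)))"
      by (simp add: cfs[OF r' c'] sum_distrib_left algebra_simps)
    also have "\<dots> = (\<Sum>k<4. \<Sum>p\<in>PS T. cf' (p(i := k)) * pauli_op n 0 (p(i := k)) $$ (r, c))"
      by (intro sum.cong refl) (simp add: pauli_upd[OF pi i r c] cf'_def fun_upd_idem pi)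
    also have "\<dots> = (\<Sum>(k, p)\<in>{..<4} \<times> PS T. cf' (p(i := k)) * pauli_op n 0 (p(i := k)) $$ (r, c))"
      by (simp add: sum.cartesian_product)
    also have "\<dots> = (\<Sum>q\<in>PS (insert i T). cf' q * pauli_op n 0 q $$ (r, c))"
      using sum.reindex[OF PS_insert_bij(1)[OF insert.hyps(2)], of "\<lambda>q. cf' q * pauli_op n 0 q $$ (r, c)"]
      unfolding PS_insert_bij(2)[OF insert.hyps(2)] by (simp add: case_prod_beta comp_def)
    finally show "M $$ (r, c) = (\<Sum>q\<in>PS (insert i T). cf' q * pauli_op n 0 q $$ (r, c))" .
  qed
qed



lemma adj_mult:
  fixes A B :: "complex mat"
  assumes A: "A \<in> carrier_mat N N" and B: "B \<in> carrier_mat N N"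
  shows "mat_adjoint (A * B) = mat_adjoint B * mat_adjoint A"
proof (rule eq_matI)
  fix r c assume "r < dim_row (mat_adjoint B * mat_adjoint A)" "c < dim_col (mat_adjoint B * mat_adjoint A)"
  then have r: "r < N" and c: "c < N" using adj_carrier[OF A] adj_carrier[OF B] by auto
  have AB: "A * B \<in> carrier_mat N N" using A B by simp
  show "mat_adjoint (A * B) $$ (r, c) = (mat_adjoint B * mat_adjoint A) $$ (r, c)"
    unfolding adj_entry[OF AB r c] mult_entry[OF A B c r] mult_entry[OF adj_carrier[OF B] adj_carrier[OF A] r c]
    by (simp add: adj_entry[OF A] adj_entry[OF B] r c mult.commute)
qed (use A B adj_carrier[OF A] adj_carrier[OF B] adj_carrier[OF mult_carrier_mat[OF A B]] in auto)

lemma adj_adj: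
  fixes A :: "complex mat"
  assumes A: "A \<in> carrier_mat N N"
  shows "mat_adjoint (mat_adjoint A) = A"
proof (rule eq_matI)
  fix r c assume "r < dim_row A" "c < dim_col A"
  then have r: "r < N" and c: "c < N" using A by auto
  show "mat_adjoint (mat_adjoint A) $$ (r, c) = A $$ (r, c)"
    using adj_entry[OF adj_carrier[OF A] r c] adj_entry[OF A c r] by simp
qed (use adj_carrier[OF adj_carrier[OF A]] A in auto)

lemma mult_entry_col: "A \<in> carrier_mat N N \<Longrightarrow> B \<in> carrier_mat N N \<Longrightarrow> r < N \<Longrightarrow> c < N \<Longrightarrow>
   (A * B) $$ (r, c) = (A *\<^sub>v col B c) $ r"
  by simp

lemma tr_swap:
  assumes A: "A \<in> carrier_mat N N" and B: "B \<in> carrier_mat N N"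
  shows "mytr N (A * B) = mytr N (B * A)"
proof -
  have "mytr N (A * B) = (\<Sum>r<N. \<Sum>m<N. A $$ (r, m) * B $$ (m, r))"
    unfolding mytr_def by (intro sum.cong refl) (simp add: mult_entry[OF A B])
  also have "\<dots> = (\<Sum>m<N. \<Sum>r<N. A $$ (r, m) * B $$ (m, r))" by (rule sum.swap)
  also have "\<dots> = mytr N (B * A)"
    unfolding mytr_def by (intro sum.cong refl) (simp add: mult_entry[OF B A] mult.commute)
  finally show ?thesis .
qed

lemma pm_aa: "pm a a = 0" by (simp add: pm_def)
lemma ph_aa: "ph a a = 0" by (simp add: ph_def)

context
  fixes n :: nat and S :: "complex mat set"
  assumes SG: "stabiliser_group n S"
begin

lemma S_pauli: "S \<subseteq> pauli_group n" using SG unfolding stabiliser_group_def by blast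
lemma S_one: "1\<^sub>m (2^n) \<in> S" using SG unfolding stabiliser_group_def by blast
lemma S_mult: "a \<in> S \<Longrightarrow> b \<in> S \<Longrightarrow> a * b \<in> S" using SG unfolding stabiliser_group_def by blast
lemma S_neg: "- 1\<^sub>m (2^n) \<notin> S" using SG unfolding stabiliser_group_def by blast
lemma S_finite: "finite S" using S_pauli pg_finite finite_subset by blast
lemma S_carrier: "s \<in> S \<Longrightarrow> s \<in> carrier_mat (2^n) (2^n)" using S_pauli pg_carrier by blast

lemma S_fix: "s \<in> S \<Longrightarrow> v \<in> codespace n S \<Longrightarrow> s *\<^sub>v v = v"
  unfolding codespace_def by blast

lemma S_adj_fix: assumes s: "s \<in> S" and v: "v \<in> codespace n S" shows "mat_adjoint s *\<^sub>v v = v"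
proof -
  have vc: "v \<in> carrier_vec (2^n)" using v unfolding codespace_def by blast
  have "mat_adjoint s *\<^sub>v v = mat_adjoint s *\<^sub>v (s *\<^sub>v v)" using S_fix[OF s v] by simp
  also have "\<dots> = (mat_adjoint s * s) *\<^sub>v v" using S_carrier[OF s] adj_carrier[OF S_carrier[OF s]] vc by simp
  also have "\<dots> = v" using pg_unitary(1)[of s n] s S_pauli vc by auto
  finally show ?thesis .
qed

definition PiS :: "complex mat" where
  "PiS = mat (2^n) (2^n) (\<lambda>(r, c). \<Sum>s\<in>S. s $$ (r, c))"

lemma PiS_carrier: "PiS \<in> carrier_mat (2^n) (2^n)" by (simp add: PiS_def)

lemma PiS_entry: "r < 2^n \<Longrightarrow> c < 2^n \<Longrightarrow> PiS $$ (r, c) = (\<Sum>s\<in>S. s $$ (r, c))"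
  by (simp add: PiS_def)

lemma PiS_inv: assumes t: "t \<in> S" shows "t * PiS = PiS"
proof (rule eq_matI)
  fix r c assume "r < dim_row PiS" "c < dim_col PiS"
  then have r: "r < 2^n" and c: "c < 2^n" by (auto simp: PiS_def)
  have tc: "t \<in> carrier_mat (2^n) (2^n)" using S_carrier t by blast
  have inj: "inj_on ((*) t) S"
  proof (rule inj_onI)
    fix a b assume a: "a \<in> S" and b: "b \<in> S" and eq: "t * a = t * b"
    have "a = (mat_adjoint t * t) * a" using pg_unitary(1)[of t n] t S_pauli S_carrier[OF a] by auto
    also have "\<dots> = mat_adjoint t * (t * a)" using adj_carrier[OF tc] tc S_carrier[OF a] by simp
    also have "\<dots> = mat_adjoint t * (t * b)" using eq by simp
    also have "\<dots> = (mat_adjoint t * t) * b" using adj_carrier[OF tc] tc S_carrier[OF b] by simp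
    also have "\<dots> = b" using pg_unitary(1)[of t n] t S_pauli S_carrier[OF b] by auto
    finally show "a = b" .
  qed
  have img: "(*) t ` S = S" by (rule endo_inj_surj[OF S_finite _ inj]) (use S_mult t in auto)
  have "(t * PiS) $$ (r, c) = (\<Sum>m<2^n. t $$ (r, m) * (\<Sum>s\<in>S. s $$ (m, c)))"
    by (simp add: mult_entry[OF tc PiS_carrier r c]) (simp add: PiS_def c)
  also have "\<dots> = (\<Sum>s\<in>S. \<Sum>m<2^n. t $$ (r, m) * s $$ (m, c))"
    by (simp add: sum_distrib_left sum.swap[of _ S])
  also have "\<dots> = (\<Sum>s\<in>S. (t * s) $$ (r, c))"
    by (intro sum.cong refl) (simp add: mult_entry[OF tc S_carrier r c])
  also have "\<dots> = (\<Sum>s\<in>(*) t ` S. s $$ (r, c))" by (simp add: sum.reindex[OF inj])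
  also have "\<dots> = PiS $$ (r, c)" unfolding img by (simp add: PiS_def r c)
  finally show "(t * PiS) $$ (r, c) = PiS $$ (r, c)" .
qed (use S_carrier t in \<open>auto simp: PiS_def\<close>)

lemma PiS_col: assumes c: "c < 2^n" shows "col PiS c \<in> codespace n S"
  unfolding codespace_def
proof (intro CollectI conjI ballI)
  show "col PiS c \<in> carrier_vec (2^n)" using PiS_carrier c by simp
  fix s assume s: "s \<in> S"
  have "s *\<^sub>v col PiS c = col (s * PiS) c"
    using col_mult2[OF S_carrier[OF s] PiS_carrier c] by (rule sym)
  then show "s *\<^sub>v col PiS c = col PiS c" using PiS_inv[OF s] by simp
qed

lemma S_trace: assumes s: "s \<in> S" shows "mytr (2^n) s = (if s = 1\<^sub>m (2^n) then of_nat (2^n) else 0)"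
proof (cases "s = 1\<^sub>m (2^n)")
  case True then show ?thesis by (simp add: mytr_def)
next
  case False
  obtain k p where sp: "s = pauli_op n k p" "k < 4" "\<forall>j<n. p j < 4"
    using s S_pauli unfolding pauli_group_def by blast
  show ?thesis
  proof (rule ccontr)
    assume "\<not> ?thesis"
    then have nz: "mytr (2^n) s \<noteq> 0" using False by simp
    then have z: "\<forall>j<n. p j = 0" using pauli_trace_nz sp by blast
    have ss: "s * s = pauli_op n (2 * k) (\<lambda>_. 0)"
    proof -
      have "s * s = pauli_op n (k + k + (\<Sum>j<n. ph (p j) (p j))) (\<lambda>j. pm (p j) (p j))"
        using pauli_mult sp by metis
      also have "\<dots> = pauli_op n (2 * k) (\<lambda>_. 0)"
        by (simp add: pm_aa ph_aa mult_2)
      finally show ?thesis .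
    qed
    have sk: "s = \<i> ^ k \<cdot>\<^sub>m 1\<^sub>m (2^n)" using pauli_zero[OF z] sp by simp
    have neg: "(-1::complex) \<cdot>\<^sub>m 1\<^sub>m (2^n) = - 1\<^sub>m (2^n)" by (rule eq_matI) auto
    have "k = 0 \<or> k = 1 \<or> k = 2 \<or> k = 3" using sp by auto
    moreover have "k \<noteq> 0" using False sk by (auto intro!: eq_matI)
    moreover have "k \<noteq> 2" using sk neg s S_neg by (auto simp: power2_eq_square)
    moreover have "k \<noteq> 1" "k \<noteq> 3"
    proof -
      have "s * s \<in> S" using S_mult s by blast
      have "pauli_op n (2 * k) (\<lambda>_. 0) = \<i> ^ (2 * k) \<cdot>\<^sub>m 1\<^sub>m (2^n)" by (rule pauli_zero) simp
      then have "k = 1 \<or> k = 3 \<Longrightarrow> s * s = - 1\<^sub>m (2^n)" using ss neg by (auto simp: numeral_eq_Suc)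
      then show "k \<noteq> 1" "k \<noteq> 3" using \<open>s * s \<in> S\<close> S_neg by auto
    qed
    ultimately show False by blast
  qed
qed

lemma PiS_trace: "mytr (2^n) PiS = of_nat (2^n)"
proof -
  have "mytr (2^n) PiS = (\<Sum>s\<in>S. mytr (2^n) s)"
    unfolding mytr_def PiS_def by (simp add: sum.swap[of _ S])
  also have "\<dots> = (\<Sum>s\<in>S. if s = 1\<^sub>m (2^n) then of_nat (2^n) else 0)"
    by (intro sum.cong refl) (simp add: S_trace)
  also have "\<dots> = of_nat (2^n)" using S_one S_finite by (simp add: sum.delta)
  finally show ?thesis .
qed

lemma tr_PiS:
  assumes Y: "Y \<in> carrier_mat (2^n) (2^n)"
  shows "mytr (2^n) (Y * PiS) = (\<Sum>s\<in>S. mytr (2^n) (Y * s))"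
proof -
  have "mytr (2^n) (Y * PiS) = (\<Sum>x<2^n. \<Sum>m<2^n. \<Sum>s\<in>S. Y $$ (x, m) * s $$ (m, x))"
    unfolding mytr_def
    by (intro sum.cong refl) (simp add: mult_entry[OF Y PiS_carrier] PiS_entry sum_distrib_left)
  also have "\<dots> = (\<Sum>x<2^n. \<Sum>s\<in>S. \<Sum>m<2^n. Y $$ (x, m) * s $$ (m, x))"
    by (intro sum.cong refl) (rule sum.swap)
  also have "\<dots> = (\<Sum>s\<in>S. \<Sum>x<2^n. \<Sum>m<2^n. Y $$ (x, m) * s $$ (m, x))"
    by (rule sum.swap)
  also have "\<dots> = (\<Sum>s\<in>S. mytr (2^n) (Y * s))"
    unfolding mytr_def by (intro sum.cong refl) (simp add: mult_entry[OF Y S_carrier])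
  finally show ?thesis .
qed

end



lemma triv_smult:
  assumes A: "A \<in> carrier_mat (2^n) (2^n)" and T: "acts_trivially_on n j A"
  shows "acts_trivially_on n j (a \<cdot>\<^sub>m A)"
  unfolding acts_trivially_on_def qbit_bit qclr_unset
proof (intro allI impI)
  fix r c :: nat assume r: "r < 2^n" and c: "c < 2^n"
  have r': "unset_bit j r < 2^n" and c': "unset_bit j c < 2^n" using r c unset_bit_less by auto
  show "(a \<cdot>\<^sub>m A) $$ (r, c) = (if bit r j = bit c j then (a \<cdot>\<^sub>m A) $$ (unset_bit j r, unset_bit j c) else 0)"
    using triv_entry[OF T r c] A r c r' c' by simp
qed

lemma tr_expand:
  assumes Z: "Z \<in> carrier_mat (2^n) (2^n)" and U: "U \<in> carrier_mat (2^n) (2^n)"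
    and cf: "\<forall>r c. r < 2^n \<longrightarrow> c < 2^n \<longrightarrow> U $$ (r, c) = (\<Sum>p\<in>PS T. cf p * pauli_op n 0 p $$ (r, c))"
  shows "mytr (2^n) (Z * U) = (\<Sum>p\<in>PS T. cf p * mytr (2^n) (Z * pauli_op n 0 p))"
proof -
  have "mytr (2^n) (Z * U) = (\<Sum>x<2^n. \<Sum>m<2^n. \<Sum>p\<in>PS T. cf p * (Z $$ (x, m) * pauli_op n 0 p $$ (m, x)))"
    unfolding mytr_def
    by (intro sum.cong refl) (simp add: mult_entry[OF Z U] cf sum_distrib_left algebra_simps)
  also have "\<dots> = (\<Sum>x<2^n. \<Sum>p\<in>PS T. \<Sum>m<2^n. cf p * (Z $$ (x, m) * pauli_op n 0 p $$ (m, x)))"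
    by (intro sum.cong refl) (rule sum.swap)
  also have "\<dots> = (\<Sum>p\<in>PS T. \<Sum>x<2^n. \<Sum>m<2^n. cf p * (Z $$ (x, m) * pauli_op n 0 p $$ (m, x)))"
    by (rule sum.swap)
  also have "\<dots> = (\<Sum>p\<in>PS T. cf p * mytr (2^n) (Z * pauli_op n 0 p))"
    unfolding mytr_def
    by (intro sum.cong refl) (simp add: mult_entry[OF Z pauli_carrier] sum_distrib_left)
  finally show ?thesis .
qed

lemma key:
  assumes SG: "stabiliser_group n S" and U: "U \<in> carrier_mat (2^n) (2^n)"
    and P0: "P0 \<in> pauli_group n" and P0l: "is_logical n S P0"
    and UP: "\<forall>v\<in>codespace n S. U *\<^sub>v v = P0 *\<^sub>v v"
  shows "\<exists>Q\<in>pauli_group n. (\<forall>v\<in>codespace n S. Q *\<^sub>v v = P0 *\<^sub>v v) \<and> is_logical n S Q \<and> wt n Q \<le> wt n U"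
proof -
  define T where "T = {j. j < n \<and> \<not> acts_trivially_on n j U}"
  have Tfin: "finite T" "T \<subseteq> {..<n}" by (auto simp: T_def)
  obtain cf where cf: "\<forall>r c. r < 2^n \<longrightarrow> c < 2^n \<longrightarrow> U $$ (r, c) = (\<Sum>p\<in>PS T. cf p * pauli_op n 0 p $$ (r, c))"
    using complete[OF Tfin U] T_def by auto
  let ?Pi = "PiS n S"
  have Pic: "?Pi \<in> carrier_mat (2^n) (2^n)" using PiS_carrier[OF SG] .
  have P0c: "P0 \<in> carrier_mat (2^n) (2^n)" using pg_carrier[OF P0] .
  have P0a: "mat_adjoint P0 \<in> carrier_mat (2^n) (2^n)" using adj_carrier[OF P0c] .
  have UPi: "U * ?Pi = P0 * ?Pi"
  proof (rule eq_matI)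
    fix r c assume "r < dim_row (P0 * ?Pi)" "c < dim_col (P0 * ?Pi)"
    then have r: "r < 2^n" and c: "c < 2^n" using P0c Pic by auto
    have "U *\<^sub>v col ?Pi c = P0 *\<^sub>v col ?Pi c" using UP PiS_col[OF SG c] by blast
    then show "(U * ?Pi) $$ (r, c) = (P0 * ?Pi) $$ (r, c)"
      using mult_entry_col[OF U Pic r c] mult_entry_col[OF P0c Pic r c] by simp
  qed (use P0c Pic U in auto)
  have tr1: "mytr (2^n) (mat_adjoint P0 * (U * ?Pi)) = of_nat (2^n)"
  proof -
    have "mat_adjoint P0 * (U * ?Pi) = (mat_adjoint P0 * P0) * ?Pi"
      unfolding UPi using P0a P0c Pic by simp
    also have "\<dots> = ?Pi" using pg_unitary(1)[OF P0] Pic by simp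
    finally show ?thesis using PiS_trace[OF SG] by simp
  qed
  have tr2: "mytr (2^n) (mat_adjoint P0 * (U * ?Pi)) =
      (\<Sum>s\<in>S. \<Sum>p\<in>PS T. cf p * mytr (2^n) ((s * mat_adjoint P0) * pauli_op n 0 p))"
  proof -
    have "mat_adjoint P0 * (U * ?Pi) = (mat_adjoint P0 * U) * ?Pi" using P0a U Pic by simp
    then have "mytr (2^n) (mat_adjoint P0 * (U * ?Pi)) = (\<Sum>s\<in>S. mytr (2^n) ((mat_adjoint P0 * U) * s))"
      using tr_PiS[OF SG] P0a U by simp
    also have "\<dots> = (\<Sum>s\<in>S. mytr (2^n) ((s * mat_adjoint P0) * U))"
    proof (intro sum.cong refl)
      fix s assume s: "s \<in> S"
      have sc: "s \<in> carrier_mat (2^n) (2^n)" using S_carrier[OF SG s] .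
      have "mytr (2^n) ((mat_adjoint P0 * U) * s) = mytr (2^n) (s * (mat_adjoint P0 * U))"
        using tr_swap[of "mat_adjoint P0 * U" "2^n" s] P0a U sc by simp
      also have "\<dots> = mytr (2^n) ((s * mat_adjoint P0) * U)" using P0a U sc by simp
      finally show "mytr (2^n) ((mat_adjoint P0 * U) * s) = mytr (2^n) ((s * mat_adjoint P0) * U)" .
    qed
    also have "\<dots> = (\<Sum>s\<in>S. \<Sum>p\<in>PS T. cf p * mytr (2^n) ((s * mat_adjoint P0) * pauli_op n 0 p))"
      by (intro sum.cong refl tr_expand[OF _ U cf]) (metis S_carrier[OF SG] P0a mult_carrier_mat)
    finally show ?thesis .
  qed
  obtain s p where s: "s \<in> S" and p: "p \<in> PS T" and nz: "mytr (2^n) ((s * mat_adjoint P0) * pauli_op n 0 p) \<noteq> 0"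
  proof -
    have "\<exists>s\<in>S. \<exists>p\<in>PS T. mytr (2^n) ((s * mat_adjoint P0) * pauli_op n 0 p) \<noteq> 0"
    proof (rule ccontr)
      assume "\<not> ?thesis"
      then have "(\<Sum>s\<in>S. \<Sum>p\<in>PS T. cf p * mytr (2^n) ((s * mat_adjoint P0) * pauli_op n 0 p)) = 0" by simp
      then show False using tr1 tr2 by simp
    qed
    then show ?thesis using that by blast
  qed
  have sc: "s \<in> carrier_mat (2^n) (2^n)" using S_carrier[OF SG s] .
  have sP: "s \<in> pauli_group n" using S_pauli[OF SG] s by blast
  have Zp: "s * mat_adjoint P0 \<in> pauli_group n" using pg_mult[OF sP pg_adj[OF P0]] .
  then obtain kz pz where Z: "s * mat_adjoint P0 = pauli_op n kz pz" and pz: "\<forall>j<n. pz j < 4"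
    unfolding pauli_group_def by blast
  have p4: "\<forall>j<n. p j < 4"
  proof (intro allI impI)
    fix j assume "j < n"
    from p have "(j \<in> T \<longrightarrow> p j < 4) \<and> (j \<notin> T \<longrightarrow> p j = 0)" unfolding PS_def by blast
    then show "p j < 4" by (cases "j \<in> T") auto
  qed
  define K where "K = kz + 0 + (\<Sum>j<n. ph (pz j) (p j))"
  have ZQ0: "(s * mat_adjoint P0) * pauli_op n 0 p = pauli_op n K (\<lambda>j. pm (pz j) (p j))"
    unfolding Z K_def by (rule pauli_mult[OF pz p4])
  have "\<forall>j<n. pm (pz j) (p j) = 0"
    using pauli_trace_nz[of n "\<lambda>j. pm (pz j) (p j)" K] nz pm_less pz p4 ZQ0 by auto
  then have ZQ: "(s * mat_adjoint P0) * pauli_op n 0 p = \<i> ^ K \<cdot>\<^sub>m 1\<^sub>m (2^n)"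
    using ZQ0 pauli_zero by simp
  define Q where "Q = P0 * mat_adjoint s"
  have sa: "mat_adjoint s \<in> carrier_mat (2^n) (2^n)" using adj_carrier[OF sc] .
  have Qc: "Q \<in> carrier_mat (2^n) (2^n)" unfolding Q_def using P0c sa by simp
  have QP: "Q \<in> pauli_group n" unfolding Q_def using pg_mult[OF P0 pg_adj[OF sP]] .
  have QZ: "Q * (s * mat_adjoint P0) = 1\<^sub>m (2^n)"
  proof -
    have "Q * (s * mat_adjoint P0) = P0 * (mat_adjoint s * (s * mat_adjoint P0))"
      unfolding Q_def by (rule assoc_mult_mat[OF P0c sa mult_carrier_mat[OF sc P0a]])
    also have "\<dots> = P0 * ((mat_adjoint s * s) * mat_adjoint P0)"
      using assoc_mult_mat[OF sa sc P0a] by simp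
    also have "\<dots> = P0 * mat_adjoint P0" using pg_unitary(1)[OF sP] P0a by simp
    also have "\<dots> = 1\<^sub>m (2^n)" using pg_unitary(2)[OF P0] .
    finally show ?thesis .
  qed
  have Qp: "pauli_op n 0 p = \<i> ^ K \<cdot>\<^sub>m Q"
  proof -
    have "pauli_op n 0 p = (Q * (s * mat_adjoint P0)) * pauli_op n 0 p" using QZ left_mult_one_mat[OF pauli_carrier[of n 0 p]] by simp
    also have "\<dots> = Q * ((s * mat_adjoint P0) * pauli_op n 0 p)"
      by (rule assoc_mult_mat[OF Qc mult_carrier_mat[OF sc P0a] pauli_carrier])
    also have "\<dots> = Q * (\<i> ^ K \<cdot>\<^sub>m 1\<^sub>m (2^n))" using ZQ by simp
    also have "\<dots> = \<i> ^ K \<cdot>\<^sub>m Q" using mult_smult_distrib[OF Qc one_carrier_mat, of "\<i> ^ K"] right_mult_one_mat[OF Qc] by simp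
    finally show ?thesis .
  qed
  have Qeq: "Q = inverse (\<i> ^ K) \<cdot>\<^sub>m pauli_op n 0 p"
    unfolding Qp by (rule eq_matI) auto
  have triv: "acts_trivially_on n j Q" if "j < n" "j \<notin> T" for j
  proof -
    have "p j = 0" using p that unfolding PS_def by auto
    then show ?thesis unfolding Qeq by (intro triv_smult pauli_carrier pauli_triv)
  qed
  have wt: "wt n Q \<le> wt n U"
    unfolding wt_def
  proof (rule card_mono)
    show "finite {i. i < n \<and> \<not> acts_trivially_on n i U}" by simp
    show "{i. i < n \<and> \<not> acts_trivially_on n i Q} \<subseteq> {i. i < n \<and> \<not> acts_trivially_on n i U}"
      using triv unfolding T_def by blast
  qed
  have Qv: "Q *\<^sub>v v = P0 *\<^sub>v v" if v: "v \<in> codespace n S" for v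
  proof -
    have vc: "v \<in> carrier_vec (2^n)" using v unfolding codespace_def by blast
    have "Q *\<^sub>v v = P0 *\<^sub>v (mat_adjoint s *\<^sub>v v)" unfolding Q_def using P0c sa vc by simp
    then show ?thesis using S_adj_fix[OF SG s v] by simp
  qed
  have Qlog: "is_logical n S Q"
    unfolding is_logical_def
  proof (intro conjI ballI Qc)
    fix v assume v: "v \<in> codespace n S"
    have vc: "v \<in> carrier_vec (2^n)" using v unfolding codespace_def by blast
    show "Q *\<^sub>v v \<in> codespace n S" using Qv[OF v] P0l v unfolding is_logical_def by simp
    have "mat_adjoint Q = s * mat_adjoint P0"
      unfolding Q_def using adj_mult[OF P0c sa] adj_adj[OF sc] by simp
    then have "mat_adjoint Q *\<^sub>v v = s *\<^sub>v (mat_adjoint P0 *\<^sub>v v)" using sc P0a vc by simp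
    moreover have "mat_adjoint P0 *\<^sub>v v \<in> codespace n S" using P0l v unfolding is_logical_def by simp
    ultimately show "mat_adjoint Q *\<^sub>v v \<in> codespace n S" using S_fix[OF SG s] by simp
  qed
  show ?thesis using QP Qv Qlog wt by blast
qed



lemma logical_carrier: "is_logical n S U \<Longrightarrow> U \<in> carrier_mat (2^n) (2^n)"
  unfolding is_logical_def by blast

lemma cs_carrier: "v \<in> codespace n S \<Longrightarrow> v \<in> carrier_vec (2^n)"
  unfolding codespace_def by blast

lemma mv3:
  fixes A B C :: "complex mat"
  assumes A: "A \<in> carrier_mat N N" and B: "B \<in> carrier_mat N N" and C: "C \<in> carrier_mat N N"
    and v: "v \<in> carrier_vec N"
  shows "(A * B * C) *\<^sub>v v = A *\<^sub>v (B *\<^sub>v (C *\<^sub>v v))"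
proof -
  have "(A * B * C) *\<^sub>v v = (A * B) *\<^sub>v (C *\<^sub>v v)"
    by (rule assoc_mult_mat_vec[OF mult_carrier_mat[OF A B] C v])
  also have "\<dots> = A *\<^sub>v (B *\<^sub>v (C *\<^sub>v v))"
    by (rule assoc_mult_mat_vec[OF A B mult_mat_vec_carrier[OF C v]])
  finally show ?thesis .
qed

lemma conj_logical:
  assumes A: "is_logical n S A" and L: "is_logical n S L"
  shows "is_logical n S (A * L * mat_adjoint A)"
proof -
  have Ac: "A \<in> carrier_mat (2^n) (2^n)" and Lc: "L \<in> carrier_mat (2^n) (2^n)"
    using A L logical_carrier by blast+
  have Aa: "mat_adjoint A \<in> carrier_mat (2^n) (2^n)" using adj_carrier[OF Ac] .
  have La: "mat_adjoint L \<in> carrier_mat (2^n) (2^n)" using adj_carrier[OF Lc] .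
  have adj: "mat_adjoint (A * L * mat_adjoint A) = A * mat_adjoint L * mat_adjoint A"
  proof -
    have "mat_adjoint (A * L * mat_adjoint A) = mat_adjoint (mat_adjoint A) * mat_adjoint (A * L)"
      using adj_mult[OF mult_carrier_mat[OF Ac Lc] Aa] .
    also have "\<dots> = A * (mat_adjoint L * mat_adjoint A)"
      using adj_adj[OF Ac] adj_mult[OF Ac Lc] by simp
    also have "\<dots> = A * mat_adjoint L * mat_adjoint A" using Ac La Aa by simp
    finally show ?thesis .
  qed
  show ?thesis
    unfolding is_logical_def
  proof (intro conjI ballI)
    show "A * L * mat_adjoint A \<in> carrier_mat (2^n) (2^n)" using Ac Lc Aa by simp
    fix v assume v: "v \<in> codespace n S"
    have vc: "v \<in> carrier_vec (2^n)" using cs_carrier[OF v] .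
    have "A * L * mat_adjoint A *\<^sub>v v = A *\<^sub>v (L *\<^sub>v (mat_adjoint A *\<^sub>v v))"
      by (rule mv3[OF Ac Lc Aa vc])
    moreover have "mat_adjoint A *\<^sub>v v \<in> codespace n S" using A v unfolding is_logical_def by blast
    ultimately show "A * L * mat_adjoint A *\<^sub>v v \<in> codespace n S"
      using A L unfolding is_logical_def by simp
    have "mat_adjoint (A * L * mat_adjoint A) *\<^sub>v v = A *\<^sub>v (mat_adjoint L *\<^sub>v (mat_adjoint A *\<^sub>v v))"
      unfolding adj by (rule mv3[OF Ac La Aa vc])
    with \<open>mat_adjoint A *\<^sub>v v \<in> codespace n S\<close>
    show "mat_adjoint (A * L * mat_adjoint A) *\<^sub>v v \<in> codespace n S"
      using A L unfolding is_logical_def by simp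
  qed
qed

lemma per_l:
  assumes SG: "stabiliser_group n S"
    and AU: "logical_unitary n S A"
    and IMP: "implements n S Ks A"
    and SP: "spread n Ks \<le> C2"
    and PL: "logical_pauli n S P"
  shows "real (log_dist n S (A * P * mat_adjoint A)) \<le> \<bar>C2\<bar> * real (log_dist n S P)"
proof -
  have Al: "is_logical n S A" using AU unfolding logical_unitary_def by blast
  have Pl: "is_logical n S P" using PL unfolding logical_pauli_def by blast
  obtain P0 where P0: "P0 \<in> pauli_group n" and P0r: "represents n S P0 P"
    using PL unfolding logical_pauli_def by blast
  have "represents n S P P" using Pl unfolding represents_def by blast
  then have "\<exists>w U. represents n S U P \<and> wt n U = w" by blast
  then have "\<exists>U. represents n S U P \<and> wt n U = log_dist n S P"
    unfolding log_dist_def by (rule LeastI_ex[where P="\<lambda>w. \<exists>U. represents n S U P \<and> wt n U = w"])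
  then obtain U where Ur: "represents n S U P" and Uw: "wt n U = log_dist n S P" by blast
  have Uc: "U \<in> carrier_mat (2^n) (2^n)" using Ur logical_carrier unfolding represents_def by blast
  have UP0: "\<forall>v\<in>codespace n S. U *\<^sub>v v = P0 *\<^sub>v v" using Ur P0r unfolding represents_def by simp
  have P0l: "is_logical n S P0" using P0r unfolding represents_def by blast
  obtain Q where QP: "Q \<in> pauli_group n" and Qv: "\<forall>v\<in>codespace n S. Q *\<^sub>v v = P0 *\<^sub>v v"
    and Ql: "is_logical n S Q" and Qw: "wt n Q \<le> wt n U"
    using key[OF SG Uc P0 P0l UP0] by blast
  have Qr: "represents n S Q P" using Ql Qv P0r unfolding represents_def by simp
  show ?thesis
  proof (cases "wt n Q = 0")
    case True
    have "{i. i < n \<and> \<not> acts_trivially_on n i Q} = {}" using True unfolding wt_def by simp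
    then have "\<forall>j<n. acts_trivially_on n j Q" by blast
    then have Qeq: "Q = Q $$ (0, 0) \<cdot>\<^sub>m 1\<^sub>m (2^n)" using triv_all logical_carrier[OF Ql] by blast
    have Ac: "A \<in> carrier_mat (2^n) (2^n)" using logical_carrier[OF Al] .
    have Qc: "Q \<in> carrier_mat (2^n) (2^n)" using logical_carrier[OF Ql] .
    have Aa: "mat_adjoint A \<in> carrier_mat (2^n) (2^n)" using adj_carrier[OF Ac] .
    have Pc: "P \<in> carrier_mat (2^n) (2^n)" using logical_carrier[OF Pl] .
    have QA: "Q * A = A * Q"
    proof -
      have "Q * A = Q $$ (0, 0) \<cdot>\<^sub>m (1\<^sub>m (2^n) * A)"
        by (subst Qeq) (rule mult_smult_assoc_mat[OF one_carrier_mat Ac])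
      also have "\<dots> = Q $$ (0, 0) \<cdot>\<^sub>m (A * 1\<^sub>m (2^n))" using Ac by simp
      also have "\<dots> = A * Q" by (subst (2) Qeq) (rule mult_smult_distrib[OF Ac one_carrier_mat, symmetric])
      finally show ?thesis .
    qed
    have AAr: "represents n S (A * mat_adjoint A) (1\<^sub>m (2^n))" using AU unfolding logical_unitary_def by blast
    have rep: "represents n S Q (A * P * mat_adjoint A)"
      unfolding represents_def
    proof (intro conjI ballI Ql)
      fix v assume v: "v \<in> codespace n S"
      have vc: "v \<in> carrier_vec (2^n)" using cs_carrier[OF v] .
      have av: "mat_adjoint A *\<^sub>v v \<in> codespace n S" using Al v unfolding is_logical_def by blast
      have avc: "mat_adjoint A *\<^sub>v v \<in> carrier_vec (2^n)" using cs_carrier[OF av] .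
      have "A * P * mat_adjoint A *\<^sub>v v = A *\<^sub>v (P *\<^sub>v (mat_adjoint A *\<^sub>v v))" by (rule mv3[OF Ac Pc Aa vc])
      also have "\<dots> = A *\<^sub>v (Q *\<^sub>v (mat_adjoint A *\<^sub>v v))" using Qr av unfolding represents_def by simp
      also have "\<dots> = (Q * A) *\<^sub>v (mat_adjoint A *\<^sub>v v)" unfolding QA using Ac Qc avc by simp
      also have "\<dots> = Q *\<^sub>v ((A * mat_adjoint A) *\<^sub>v v)" using Ac Qc Aa vc by simp
      also have "\<dots> = Q *\<^sub>v v" using AAr v vc unfolding represents_def by simp
      finally show "Q *\<^sub>v v = A * P * mat_adjoint A *\<^sub>v v" by simp
    qed
    have "log_dist n S (A * P * mat_adjoint A) \<le> wt n Q"
      unfolding log_dist_def by (rule Least_le) (use rep in blast)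
    then show ?thesis using True by simp
  next
    case False
    have ch: "represents n S (chan_apply n Ks Q) (A * P * mat_adjoint A)"
      using IMP Pl Qr unfolding implements_def by blast
    have ld: "log_dist n S (A * P * mat_adjoint A) \<le> wt n (chan_apply n Ks Q)"
      unfolding log_dist_def by (rule Least_le) (use ch in blast)
    have "spread_at n Ks Q \<le> spread n Ks"
      unfolding spread_def by (rule Max_ge) (use pg_finite QP in auto)
    then have "real (wt n (chan_apply n Ks Q)) / real (wt n Q) \<le> C2" using SP unfolding spread_at_def by simp
    then have "real (wt n (chan_apply n Ks Q)) \<le> C2 * real (wt n Q)" using False by (simp add: divide_le_eq)
    also have "\<dots> \<le> \<bar>C2\<bar> * real (wt n Q)" by (simp add: mult_right_mono)
    also have "\<dots> \<le> \<bar>C2\<bar> * real (log_dist n S P)" using Qw Uw by (simp add: mult_left_mono)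
    finally show ?thesis using ld by simp
  qed
qed

theorem lemma2:
  fixes n :: "nat \<Rightarrow> nat" and S :: "nat \<Rightarrow> complex mat set"
    and Ks :: "nat \<Rightarrow> complex mat list" and A :: "nat \<Rightarrow> complex mat"
    and P :: "nat \<Rightarrow> complex mat"
  assumes "stabiliser_family n S"
    and "\<forall>l. logical_unitary (n l) (S l) (A l)"
    and "\<forall>l. implements (n l) (S l) (Ks l) (A l)"
    and "bounded_spread n Ks"
    and "\<forall>l. logical_pauli (n l) (S l) (P l)"
  shows "P \<in> P_down n S \<longrightarrow> (\<lambda>l. A l * P l * mat_adjoint (A l)) \<in> L_down n S"
proof
  assume "P \<in> P_down n S"
  then obtain C1 where C1: "\<forall>l. real (log_dist (n l) (S l) (P l)) / real (code_dist (n l) (S l)) \<le> C1"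
    unfolding P_down_def L_down_def by blast
  obtain C2 where C2: "\<forall>l. spread (n l) (Ks l) \<le> C2" using assms(4) unfolding bounded_spread_def by blast
  have log: "is_logical (n l) (S l) (A l * P l * mat_adjoint (A l))" for l
    using conj_logical assms(2,5) unfolding logical_unitary_def logical_pauli_def by blast
  have bound: "real (log_dist (n l) (S l) (A l * P l * mat_adjoint (A l))) / real (code_dist (n l) (S l)) \<le> \<bar>C2\<bar> * \<bar>C1\<bar>" for l
  proof (cases "code_dist (n l) (S l) = 0")
    case True then show ?thesis by simp
  next
    case False
    let ?d = "real (code_dist (n l) (S l))"
    have d: "?d > 0" using False by simp
    have pl: "real (log_dist (n l) (S l) (A l * P l * mat_adjoint (A l))) \<le> \<bar>C2\<bar> * real (log_dist (n l) (S l) (P l))"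
      using per_l[of "n l" "S l" "A l" "Ks l" C2 "P l"] assms(1,2,3,5) C2
      unfolding stabiliser_family_def by blast
    have "real (log_dist (n l) (S l) (A l * P l * mat_adjoint (A l))) / ?d \<le> \<bar>C2\<bar> * (real (log_dist (n l) (S l) (P l)) / ?d)"
      using pl d by (simp add: divide_right_mono)
    also have "\<dots> \<le> \<bar>C2\<bar> * \<bar>C1\<bar>"
      using C1 by (intro mult_left_mono) (auto intro: order_trans[OF _ abs_ge_self])
    finally show ?thesis .
  qed
  show "(\<lambda>l. A l * P l * mat_adjoint (A l)) \<in> L_down n S"
    unfolding L_down_def using log bound by blast
qed



end
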